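(* Let $1\to H\to\Gamma\xrightarrow{\pi}K\to1$ be a short exact sequence of groups where $H$ is amenable, $\Gamma$ is finitely generated and $K$ is extraterrestrial. Then $\Gamma$ is extraterrestrial.
   Context: A finitely generated group is extraterrestrial if its Cayley graph with respect to some (equivalently any) finite symmetric generating set is extraterrestrial. A graph $G=(V,E)$ is extraterrestrial if for every $m$ there is $k$ such that for every $r$ there is a triple $(U,F,O)$ of pairwise disjoint finite vertex sets with $U\neq\emptyset$, $|U|\ge m|F|$, a bijection $\mu:U\to O$ with $d_G(u,\mu(u))\le k$, and every path from $U$ to $O$ either contains a vertex of $F$ or has length at least $r$. *)

theory Defs
  imports "HOL-Algebra.Algebra"
begin

definition is_walk :: "'a set \<Rightarrow> ('a \<Rightarrow> 'a \<Rightarrow> bool) \<Rightarrow> 'a list \<Rightarrow> bool" where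
  "is_walk V E xs \<longleftrightarrow> xs \<noteq> [] \<and> set xs \<subseteq> V \<and>
     (\<forall>i. Suc i < length xs \<longrightarrow> E (xs ! i) (xs ! Suc i))"

definition walk_len :: "'a list \<Rightarrow> nat" where
  "walk_len xs = length xs - 1"

definition dist_le :: "'a set \<Rightarrow> ('a \<Rightarrow> 'a \<Rightarrow> bool) \<Rightarrow> 'a \<Rightarrow> 'a \<Rightarrow> nat \<Rightarrow> bool" where
  "dist_le V E u v k \<longleftrightarrow>
     (\<exists>xs. is_walk V E xs \<and> hd xs = u \<and> last xs = v \<and> walk_len xs \<le> k)"

definition extraterrestrial :: "'a set \<Rightarrow> ('a \<Rightarrow> 'a \<Rightarrow> bool) \<Rightarrow> bool" where
  "extraterrestrial V E \<longleftrightarrow>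
    (\<forall>m::nat. \<exists>k::nat. \<forall>r::nat. \<exists>U F W.
       U \<subseteq> V \<and> F \<subseteq> V \<and> W \<subseteq> V \<and>
       finite U \<and> finite F \<and> finite W \<and>
       U \<inter> F = {} \<and> U \<inter> W = {} \<and> F \<inter> W = {} \<and>
       U \<noteq> {} \<and> card U \<ge> m * card F \<and>
       (\<exists>\<mu>. bij_betw \<mu> U W \<and> (\<forall>u\<in>U. dist_le V E u (\<mu> u) k)) \<and>
       (\<forall>xs. is_walk V E xs \<and> hd xs \<in> U \<and> last xs \<in> W \<longrightarrow>
              set xs \<inter> F \<noteq> {} \<or> walk_len xs \<ge> r))"

definition cayley_adj :: "('a, 'b) monoid_scheme \<Rightarrow> 'a set \<Rightarrow> 'a \<Rightarrow> 'a \<Rightarrow> bool" where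
  "cayley_adj G S g h \<longleftrightarrow> (\<exists>s\<in>S. h = g \<otimes>\<^bsub>G\<^esub> s)"

definition finite_symmetric_generating_set :: "('a, 'b) monoid_scheme \<Rightarrow> 'a set \<Rightarrow> bool" where
  "finite_symmetric_generating_set G S \<longleftrightarrow>
     finite S \<and> S \<subseteq> carrier G \<and> (\<forall>s\<in>S. inv\<^bsub>G\<^esub> s \<in> S) \<and> generate G S = carrier G"

definition finitely_generated_group :: "('a, 'b) monoid_scheme \<Rightarrow> bool" where
  "finitely_generated_group G \<longleftrightarrow>
     (\<exists>S. finite S \<and> S \<subseteq> carrier G \<and> generate G S = carrier G)"

text \<open>Extraterrestrial group: the Cayley graph w.r.t. some finite symmetric
  generating set is extraterrestrial (the paper notes this is equivalent to "any").\<close>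
definition extraterrestrial_group :: "('a, 'b) monoid_scheme \<Rightarrow> bool" where
  "extraterrestrial_group G \<longleftrightarrow>
     (\<exists>S. finite_symmetric_generating_set G S \<and> extraterrestrial (carrier G) (cayley_adj G S))"

definition amenable_group :: "('a, 'b) monoid_scheme \<Rightarrow> bool" where
  "amenable_group G \<longleftrightarrow>
     (\<exists>\<mu> :: 'a set \<Rightarrow> real.
        (\<forall>A. A \<subseteq> carrier G \<longrightarrow> \<mu> A \<ge> 0) \<and>
        \<mu> (carrier G) = 1 \<and>
        (\<forall>A B. A \<subseteq> carrier G \<longrightarrow> B \<subseteq> carrier G \<longrightarrow> A \<inter> B = {} \<longrightarrow>
               \<mu> (A \<union> B) = \<mu> A + \<mu> B) \<and>
        (\<forall>g\<in>carrier G. \<forall>A. A \<subseteq> carrier G \<longrightarrow> \<mu> (g <#\<^bsub>G\<^esub> A) = \<mu> A))"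

end

theory Submission
  imports Defs
begin

definition hallc :: "'a set \<Rightarrow> ('a \<times> 'b) set \<Rightarrow> bool" where
  "hallc VV R \<longleftrightarrow> (\<forall>L. finite L \<and> L \<subseteq> VV \<longrightarrow> card L \<le> card (R `` L))"

lemma img_finite:
  assumes "\<forall>x\<in>VV. finite (R `` {x})" "finite L" "L \<subseteq> VV"
  shows "finite (R `` L)"
proof -
  have "R `` L = (\<Union>x\<in>L. R `` {x})" by auto
  thus ?thesis using assms by auto
qed

lemma hall_inf:
  fixes R :: "('a \<times> 'b) set" and VV :: "'a set"
  assumes fin: "\<forall>x\<in>VV. finite (R `` {x})"
  and hall: "hallc VV R"
  shows "\<exists>f. inj_on f VV \<and> (\<forall>x\<in>VV. (x, f x) \<in> R)"
proof -
  define DD where "DD = {D. D \<subseteq> R \<and> hallc VV (R - D)}"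
  have "\<forall>C\<in>chains DD. \<Union>C \<in> DD"
  proof
    fix C assume C: "C \<in> chains DD"
    hence CD: "C \<subseteq> DD" and ch: "\<forall>D1\<in>C. \<forall>D2\<in>C. D1 \<subseteq> D2 \<or> D2 \<subseteq> D1"
      unfolding chains_def chain_subset_def by auto
    show "\<Union>C \<in> DD"
    proof (cases "C = {}")
      case True thus ?thesis using hall by (simp add: DD_def)
    next
      case False
      have "hallc VV (R - \<Union>C)" unfolding hallc_def
      proof (intro allI impI)
        fix L assume L: "finite L \<and> L \<subseteq> VV"
        define E where "E = L \<times> (R `` L)"
        have fE: "finite E" using img_finite[OF fin] L by (simp add: E_def)
        have ff: "finite ((\<lambda>D. D \<inter> E) ` C)"
          by (rule finite_subset[of _ "Pow E"]) (use fE in auto)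
        obtain D0' where D0': "D0' \<in> (\<lambda>D. D \<inter> E) ` C"
          "\<forall>b\<in>(\<lambda>D. D \<inter> E) ` C. D0' \<le> b \<longrightarrow> D0' = b"
          using finite_has_maximal[OF ff] False by blast
        then obtain D0 where D0: "D0 \<in> C" "D0' = D0 \<inter> E" by auto
        have mx: "D \<inter> E \<subseteq> D0 \<inter> E" if "D \<in> C" for D
        proof -
          have "D \<subseteq> D0 \<or> D0 \<subseteq> D" using ch D0(1) that by blast
          moreover have "D0 \<inter> E \<subseteq> D \<inter> E \<Longrightarrow> D0 \<inter> E = D \<inter> E"
            using D0' D0(2) that by blast
          ultimately show ?thesis by blast
        qed
        have eq: "(R - \<Union>C) `` L = (R - D0) `` L"
        proof
          show "(R - \<Union>C) `` L \<subseteq> (R - D0) `` L" using D0 by auto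
        next
          show "(R - D0) `` L \<subseteq> (R - \<Union>C) `` L"
          proof
            fix y assume "y \<in> (R - D0) `` L"
            then obtain x where x: "x \<in> L" "(x,y) \<in> R" "(x,y) \<notin> D0" by auto
            have "(x,y) \<in> E" using x by (auto simp: E_def)
            hence "(x,y) \<notin> \<Union>C" using mx x(3) by blast
            thus "y \<in> (R - \<Union>C) `` L" using x by auto
          qed
        qed
        have "hallc VV (R - D0)" using CD D0 by (auto simp: DD_def)
        thus "card L \<le> card ((R - \<Union>C) `` L)" using L eq by (simp add: hallc_def)
      qed
      moreover have "\<Union>C \<subseteq> R" using CD by (auto simp: DD_def)
      ultimately show ?thesis by (simp add: DD_def)
    qed
  qed
  from Zorn_Lemma[OF this] obtain M where M: "M \<in> DD" "\<forall>VV\<in>DD. M \<subseteq> VV \<longrightarrow> VV = M" by blast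
  define Rs where "Rs = R - M"
  have hRs: "hallc VV Rs" using M by (simp add: DD_def Rs_def)
  have fins: "finite (Rs `` L)" if "finite L" "L \<subseteq> VV" for L
    by (rule finite_subset[OF _ img_finite[OF fin that]]) (auto simp: Rs_def)
  have ex: "\<exists>y. (x,y) \<in> Rs" if "x \<in> VV" for x
  proof -
    have "finite {x} \<and> {x} \<subseteq> VV" using that by auto
    hence "card {x} \<le> card (Rs `` {x})" using hRs unfolding hallc_def by blast
    hence "Rs `` {x} \<noteq> {}" by auto
    thus ?thesis by auto
  qed
  have break: "\<exists>L. finite L \<and> L \<subseteq> VV \<and> x \<in> L \<and> card (Rs `` L) \<ge> card L \<and>
       card ((Rs - {(x,y)}) `` L) < card L"
    if "(x,y) \<in> Rs" "x \<in> VV" for x y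
  proof -
    have "M \<union> {(x,y)} \<noteq> M" using that by (auto simp: Rs_def)
    moreover have "M \<union> {(x,y)} \<subseteq> R" using that M by (auto simp: Rs_def DD_def)
    ultimately have "\<not> hallc VV (R - (M \<union> {(x,y)}))" using M(2) unfolding DD_def by blast
    moreover have "R - (M \<union> {(x,y)}) = Rs - {(x,y)}" by (auto simp: Rs_def)
    ultimately obtain L where L: "finite L" "L \<subseteq> VV" "card ((Rs - {(x,y)}) `` L) < card L"
      unfolding hallc_def by auto
    have cL: "card L \<le> card (Rs `` L)" using hRs L(1,2) unfolding hallc_def by blast
    have "x \<in> L"
    proof (rule ccontr)
      assume "x \<notin> L"
      hence "(Rs - {(x,y)}) `` L = Rs `` L" by blast
      thus False using L(3) cL by simp
    qed
    thus ?thesis using L cL by blast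
  qed
  have uniq: "y1 = y2" if xy: "x \<in> VV" "(x,y1) \<in> Rs" "(x,y2) \<in> Rs" for x y1 y2
  proof (rule ccontr)
    assume ne: "y1 \<noteq> y2"
    obtain L1 where L1: "finite L1" "L1 \<subseteq> VV" "x \<in> L1" "card ((Rs - {(x,y1)}) `` L1) < card L1"
      using break[OF xy(2,1)] by blast
    obtain L2 where L2: "finite L2" "L2 \<subseteq> VV" "x \<in> L2" "card ((Rs - {(x,y2)}) `` L2) < card L2"
      using break[OF xy(3,1)] by blast
    define P where "P = (Rs - {(x,y1)}) `` L1"
    define Q where "Q = (Rs - {(x,y2)}) `` L2"
    have fP: "finite P" unfolding P_def by (rule finite_subset[OF _ fins[OF L1(1,2)]]) auto
    have fQ: "finite Q" unfolding Q_def by (rule finite_subset[OF _ fins[OF L2(1,2)]]) auto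
    have a: "Rs `` (L1 \<union> L2) \<subseteq> P \<union> Q"
    proof
      fix z assume "z \<in> Rs `` (L1 \<union> L2)"
      then obtain w where w: "w \<in> L1 \<union> L2" "(w,z) \<in> Rs" by auto
      show "z \<in> P \<union> Q"
      proof (cases "w = x")
        case True
        then show ?thesis using w L1 L2 ne unfolding P_def Q_def by (cases "z = y1") auto
      next
        case False
        then show ?thesis using w unfolding P_def Q_def by auto
      qed
    qed
    have b: "Rs `` (L1 \<inter> L2 - {x}) \<subseteq> P \<inter> Q" unfolding P_def Q_def by blast
    have "finite (L1 \<union> L2) \<and> (L1 \<union> L2) \<subseteq> VV" using L1(1,2) L2(1,2) by blast
    hence c1: "card (L1 \<union> L2) \<le> card (Rs `` (L1 \<union> L2))" using hRs unfolding hallc_def by blast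
    have "finite (L1 \<inter> L2 - {x}) \<and> (L1 \<inter> L2 - {x}) \<subseteq> VV" using L1(1,2) by blast
    hence c2: "card (L1 \<inter> L2 - {x}) \<le> card (Rs `` (L1 \<inter> L2 - {x}))" using hRs unfolding hallc_def by blast
    have c3: "card (Rs `` (L1 \<union> L2)) \<le> card (P \<union> Q)" using a fP fQ by (simp add: card_mono)
    have c4: "card (Rs `` (L1 \<inter> L2 - {x})) \<le> card (P \<inter> Q)" using b fP fQ by (simp add: card_mono)
    have c5: "card (P \<union> Q) + card (P \<inter> Q) = card P + card Q" using card_Un_Int[OF fP fQ] by simp
    have c6: "card (L1 \<union> L2) + card (L1 \<inter> L2) = card L1 + card L2" using card_Un_Int[OF L1(1) L2(1)] by simp
    have xI: "x \<in> L1 \<inter> L2" using L1(3) L2(3) by blast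
    have fI: "finite (L1 \<inter> L2)" using L1(1) by blast
    have pos: "card (L1 \<inter> L2) > 0" using fI xI card_gt_0_iff by blast
    have c7: "card (L1 \<inter> L2 - {x}) + 1 = card (L1 \<inter> L2)"
      using card_Diff_singleton[OF xI] pos by linarith
    show False using c1 c2 c3 c4 c5 c6 c7 L1(4) L2(4) unfolding P_def[symmetric] Q_def[symmetric] by linarith
  qed
  define f where "f x = (SOME y. (x,y) \<in> Rs)" for x
  have fR: "(x, f x) \<in> Rs" if "x \<in> VV" for x using ex[OF that] unfolding f_def by (rule someI_ex)
  have "inj_on f VV"
  proof (rule inj_onI)
    fix x1 x2 assume x: "x1 \<in> VV" "x2 \<in> VV" "f x1 = f x2"
    show "x1 = x2"
    proof (rule ccontr)
      assume ne: "x1 \<noteq> x2"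
      have "Rs `` {x1, x2} \<subseteq> {f x1}" using uniq fR x by auto
      hence "card (Rs `` {x1,x2}) \<le> card {f x1}" by (intro card_mono) auto
      hence "card (Rs `` {x1,x2}) \<le> 1" by simp
      moreover have "finite {x1,x2} \<and> {x1,x2} \<subseteq> VV" using x by auto
      hence "card {x1,x2} \<le> card (Rs `` {x1,x2})" using hRs unfolding hallc_def by blast
      ultimately show False using ne by simp
    qed
  qed
  moreover have "\<forall>x\<in>VV. (x, f x) \<in> R" using fR by (auto simp: Rs_def)
  ultimately show ?thesis by blast
qed

lemma fadd_gen:
  fixes \<nu> :: "'a set \<Rightarrow> real"
  assumes add: "\<forall>A B. A \<subseteq> C \<longrightarrow> B \<subseteq> C \<longrightarrow> A \<inter> B = {} \<longrightarrow> \<nu> (A \<union> B) = \<nu> A + \<nu> B"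
  and "finite I" "\<forall>i\<in>I. B i \<subseteq> C" "\<forall>i\<in>I. \<forall>j\<in>I. i \<noteq> j \<longrightarrow> B i \<inter> B j = {}"
  shows "\<nu> (\<Union>i\<in>I. B i) = (\<Sum>i\<in>I. \<nu> (B i))"
  using assms(2-4)
proof (induction I rule: finite_induct)
  case empty
  have "\<nu> ({} \<union> {}) = \<nu> {} + \<nu> {}" using add by blast
  then show ?case by simp
next
  case (insert i I)
  have "\<nu> (B i \<union> (\<Union>j\<in>I. B j)) = \<nu> (B i) + \<nu> (\<Union>j\<in>I. B j)"
    using add insert.prems insert.hyps by (intro add[rule_format]) auto
  then show ?case using insert by simp
qed

lemma (in group) folner_right:
  fixes \<nu> :: "'a set \<Rightarrow> real"
  assumes nn: "\<forall>A. A \<subseteq> carrier G \<longrightarrow> \<nu> A \<ge> 0" and one: "\<nu> (carrier G) = 1"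
  and add: "\<forall>A B. A \<subseteq> carrier G \<longrightarrow> B \<subseteq> carrier G \<longrightarrow> A \<inter> B = {} \<longrightarrow> \<nu> (A \<union> B) = \<nu> A + \<nu> B"
  and rinv: "\<forall>g\<in>carrier G. \<forall>A. A \<subseteq> carrier G \<longrightarrow> \<nu> (A #> g) = \<nu> A"
  and T: "finite T" "T \<subseteq> carrier G"
  shows "\<exists>A. finite A \<and> A \<noteq> {} \<and> A \<subseteq> carrier G \<and> card {a \<otimes> t | a t. a \<in> A \<and> t \<in> T} \<le> 2 * card A"
proof (rule ccontr)
  assume nt: "\<not> ?thesis"
  have neg: "card {a \<otimes> t | a t. a \<in> A \<and> t \<in> T} > 2 * card A"
    if "finite A" "A \<noteq> {}" "A \<subseteq> carrier G" for A
  proof -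
    have "\<not> card {a \<otimes> t | a t. a \<in> A \<and> t \<in> T} \<le> 2 * card A" using nt that by blast
    thus ?thesis by simp
  qed
  define XX where "XX = carrier G \<times> (UNIV :: bool set)"
  define R where "R = {((x,b::bool), x \<otimes> t) | x b t. x \<in> carrier G \<and> t \<in> T}"
  have fin: "\<forall>x\<in>XX. finite (R `` {x})"
  proof
    fix xb assume "xb \<in> XX"
    obtain x b where xb: "xb = (x,b)" by (cases xb)
    have "R `` {xb} \<subseteq> (\<lambda>t. x \<otimes> t) ` T" by (auto simp: R_def xb)
    thus "finite (R `` {xb})" using T by (meson finite_imageI finite_subset)
  qed
  have hall: "hallc XX R" unfolding hallc_def
  proof (intro allI impI)
    fix L assume L: "finite L \<and> L \<subseteq> XX"
    show "card L \<le> card (R `` L)"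
    proof (cases "L = {}")
      case True thus ?thesis by simp
    next
      case False
      define A where "A = fst ` L"
      have A: "finite A" "A \<noteq> {}" "A \<subseteq> carrier G" using L False by (auto simp: A_def XX_def)
      have "card L \<le> card (A \<times> (UNIV :: bool set))"
      proof (rule card_mono)
        show "finite (A \<times> (UNIV :: bool set))" using A by simp
        show "L \<subseteq> A \<times> UNIV" unfolding A_def by (auto simp: image_iff) (metis fst_conv)
      qed
      also have "\<dots> = 2 * card A" by (simp add: card_cartesian_product)
      also have "\<dots> < card {a \<otimes> t | a t. a \<in> A \<and> t \<in> T}" using neg[OF A] .
      also have "{a \<otimes> t | a t. a \<in> A \<and> t \<in> T} = R `` L"
      proof
        show "{a \<otimes> t | a t. a \<in> A \<and> t \<in> T} \<subseteq> R `` L"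
        proof
          fix y assume "y \<in> {a \<otimes> t | a t. a \<in> A \<and> t \<in> T}"
          then obtain a t where at: "y = a \<otimes> t" "a \<in> A" "t \<in> T" by auto
          then obtain b where "(a,b) \<in> L" by (auto simp: A_def)
          moreover have "((a,b), y) \<in> R" using at A by (auto simp: R_def)
          ultimately show "y \<in> R `` L" by auto
        qed
        show "R `` L \<subseteq> {a \<otimes> t | a t. a \<in> A \<and> t \<in> T}"
        proof
          fix y assume "y \<in> R `` L"
          then obtain xb where xb: "xb \<in> L" "(xb, y) \<in> R" by auto
          then obtain x b t where "xb = (x,b)" "y = x \<otimes> t" "t \<in> T" by (auto simp: R_def)
          thus "y \<in> {a \<otimes> t | a t. a \<in> A \<and> t \<in> T}" using xb by (auto simp: A_def image_iff) (metis fst_conv)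
        qed
      qed
      finally show ?thesis by simp
    qed
  qed
  obtain f where f: "inj_on f XX" "\<forall>x\<in>XX. (x, f x) \<in> R" using hall_inf[OF fin hall] by blast
  define Img where "Img b = (\<lambda>x. f (x,b)) ` carrier G" for b
  have fprop: "\<exists>t\<in>T. f (x,b) = x \<otimes> t" if "x \<in> carrier G" for x b
    using f(2) that by (auto simp: R_def XX_def)
  have Imgc: "Img b \<subseteq> carrier G" for b
  proof
    fix y assume "y \<in> Img b" then obtain x where x: "x \<in> carrier G" "y = f (x,b)" by (auto simp: Img_def)
    then obtain t where "t \<in> T" "f (x,b) = x \<otimes> t" using fprop by blast
    thus "y \<in> carrier G" using x T by auto
  qed
  have Img1: "\<nu> (Img b) = 1" for b
  proof -
    define Ab where "Ab t = {x \<in> carrier G. f (x,b) = x \<otimes> t}" for t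
    have Abc: "\<forall>t\<in>T. Ab t \<subseteq> carrier G" by (auto simp: Ab_def)
    have Abd: "\<forall>t\<in>T. \<forall>t'\<in>T. t \<noteq> t' \<longrightarrow> Ab t \<inter> Ab t' = {}"
      using T by (auto simp: Ab_def) (metis l_cancel subsetD)
    have "carrier G = (\<Union>t\<in>T. Ab t)" using fprop by (auto simp: Ab_def)
    hence c1: "\<nu> (carrier G) = (\<Sum>t\<in>T. \<nu> (Ab t))"
      using fadd_gen[OF add T(1) Abc Abd] by simp
    have rc: "Ab t #> t = (\<lambda>x. f (x,b)) ` Ab t" if "t \<in> T" for t
      by (auto simp: Ab_def r_coset_def)
    have "Img b = (\<Union>t\<in>T. Ab t #> t)"
      using rc `carrier G = (\<Union>t\<in>T. Ab t)` by (simp add: Img_def image_UN)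
    moreover have "\<forall>t\<in>T. Ab t #> t \<subseteq> carrier G" using Abc T
      by (metis r_coset_subset_G subsetD)
    moreover have "\<forall>t\<in>T. \<forall>t'\<in>T. t \<noteq> t' \<longrightarrow> (Ab t #> t) \<inter> (Ab t' #> t') = {}"
    proof (intro ballI impI)
      fix t t' assume tt: "t \<in> T" "t' \<in> T" "t \<noteq> t'"
      show "(Ab t #> t) \<inter> (Ab t' #> t') = {}"
      proof -
        have "inj_on (\<lambda>x. f (x,b)) (carrier G)"
          using f(1) by (auto simp: inj_on_def XX_def)
        moreover have "Ab t \<inter> Ab t' = {}" using Abd tt by blast
        ultimately have "(\<lambda>x. f (x,b)) ` Ab t \<inter> (\<lambda>x. f (x,b)) ` Ab t' = {}"
          using Abc tt by (auto simp: inj_on_def) blast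
        thus ?thesis using rc tt by simp
      qed
    qed
    ultimately have "\<nu> (Img b) = (\<Sum>t\<in>T. \<nu> (Ab t #> t))"
      using fadd_gen[OF add T(1)] by simp
    also have "\<dots> = (\<Sum>t\<in>T. \<nu> (Ab t))" using rinv Abc T by (intro sum.cong) auto
    finally show ?thesis using c1 one by simp
  qed
  have dis: "Img True \<inter> Img False = {}"
    using f(1) by (auto simp: Img_def inj_on_def XX_def)
  have "\<nu> (Img True \<union> Img False) = 2" using add Imgc dis Img1 by simp
  moreover have "carrier G = (Img True \<union> Img False) \<union> (carrier G - (Img True \<union> Img False))"
    using Imgc by auto
  hence "\<nu> (carrier G) = \<nu> (Img True \<union> Img False) + \<nu> (carrier G - (Img True \<union> Img False))"
    using add Imgc by (metis Diff_disjoint Diff_subset Un_subset_iff)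
  moreover have "\<nu> (carrier G - (Img True \<union> Img False)) \<ge> 0" using nn by auto
  ultimately show False using one by simp
qed

lemma walk_single[simp]: "is_walk V E [x] \<longleftrightarrow> x \<in> V"
  by (simp add: is_walk_def)

lemma walk_cons2: "is_walk V E (x # y # xs) \<longleftrightarrow> x \<in> V \<and> E x y \<and> is_walk V E (y # xs)"
proof
  assume w: "is_walk V E (x # y # xs)"
  have "\<forall>i. Suc i < length (y # xs) \<longrightarrow> E ((y # xs) ! i) ((y # xs) ! Suc i)"
  proof (intro allI impI)
    fix i assume "Suc i < length (y # xs)"
    hence "Suc (Suc i) < length (x # y # xs)" by simp
    hence "E ((x # y # xs) ! Suc i) ((x # y # xs) ! Suc (Suc i))" using w by (simp only: is_walk_def)
    thus "E ((y # xs) ! i) ((y # xs) ! Suc i)" by simp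
  qed
  moreover have "E x y" using w unfolding is_walk_def by (metis One_nat_def length_Cons nth_Cons_0 nth_Cons_Suc zero_less_Suc Suc_less_eq)
  ultimately show "x \<in> V \<and> E x y \<and> is_walk V E (y # xs)" using w by (auto simp: is_walk_def)
next
  assume a: "x \<in> V \<and> E x y \<and> is_walk V E (y # xs)"
  have "E ((x # y # xs) ! i) ((x # y # xs) ! Suc i)" if "Suc i < length (x # y # xs)" for i
  proof (cases i)
    case 0 thus ?thesis using a by simp
  next
    case (Suc j)
    hence "Suc j < length (y # xs)" using that by simp
    hence "E ((y # xs) ! j) ((y # xs) ! Suc j)" using a by (simp only: is_walk_def)
    thus ?thesis using Suc by simp
  qed
  thus "is_walk V E (x # y # xs)" using a by (auto simp: is_walk_def)
qed

lemma walk_nonempty: "is_walk V E xs \<Longrightarrow> xs \<noteq> []" by (simp add: is_walk_def)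

lemma walk_nth: "is_walk V E xs \<Longrightarrow> i < length xs \<Longrightarrow> xs ! i \<in> V"
  by (auto simp: is_walk_def)

lemma walk_step: "is_walk V E xs \<Longrightarrow> Suc i < length xs \<Longrightarrow> E (xs ! i) (xs ! Suc i)"
  by (auto simp: is_walk_def)

lemma walk_map:
  assumes "is_walk V E xs" "\<And>x. x \<in> V \<Longrightarrow> f x \<in> V'"
    "\<And>x y. x \<in> V \<Longrightarrow> y \<in> V \<Longrightarrow> E x y \<Longrightarrow> E' (f x) (f y)"
  shows "is_walk V' E' (map f xs)"
  using assms unfolding is_walk_def by (auto simp: subset_iff)

lemma walk_remdups:
  assumes "\<And>x y. x \<in> V \<Longrightarrow> y \<in> V \<Longrightarrow> E' x y \<Longrightarrow> E x y \<or> x = y"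
  shows "is_walk V E' xs \<Longrightarrow> is_walk V E (remdups_adj xs)"
proof (induction xs rule: remdups_adj.induct)
  case 1 thus ?case by (simp add: is_walk_def)
next
  case (2 x) thus ?case by simp
next
  case (3 x y xs)
  have w: "x \<in> V" "E' x y" "is_walk V E' (y # xs)" using "3.prems" by (auto simp: walk_cons2)
  have yV: "y \<in> V" using w(3) by (simp add: is_walk_def)
  show ?case
  proof (cases "x = y")
    case True
    then show ?thesis using "3.IH"(1) w by simp
  next
    case False
    have IH: "is_walk V E (remdups_adj (y # xs))" using "3.IH"(2)[OF False] w(3) .
    have e: "remdups_adj (y # xs) = y # tl (remdups_adj (y # xs))" by simp
    have "is_walk V E (x # y # tl (remdups_adj (y # xs)))"
      unfolding walk_cons2 using w IH e assms[OF w(1) yV w(2)] False by metis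
    then show ?thesis using False e by simp
  qed
qed

lemma walk_len_remdups: "walk_len (remdups_adj xs) \<le> walk_len xs"
  unfolding walk_len_def using remdups_adj_length[of xs] by linarith

fun liftw :: "('a \<Rightarrow> 'b \<Rightarrow> 'b \<Rightarrow> 'a) \<Rightarrow> 'a \<Rightarrow> 'b list \<Rightarrow> 'a list" where
  "liftw st d [] = [d]"
| "liftw st d [x] = [d]"
| "liftw st d (x # y # r) = d # liftw st (st d x y) (y # r)"

lemma liftw_ne: "liftw st d xs \<noteq> []" by (induction st d xs rule: liftw.induct) auto

lemma liftw_hd[simp]: "hd (liftw st d xs) = d" by (induction st d xs rule: liftw.induct) auto

lemma liftw_len: "xs \<noteq> [] \<Longrightarrow> length (liftw st d xs) = length xs"
  by (induction st d xs rule: liftw.induct) auto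

lemma liftw_map_aux:
  assumes "\<And>d x y. d \<in> D \<Longrightarrow> st d x y \<in> D \<and> st (c d) x y = c (st d x y)"
  shows "d \<in> D \<Longrightarrow> liftw st (c d) (x # r) = map c (liftw st d (x # r))"
proof (induction r arbitrary: d x)
  case Nil thus ?case by simp
next
  case (Cons y r)
  have "st d x y \<in> D" "st (c d) x y = c (st d x y)" using assms Cons.prems by auto
  then show ?case using Cons.IH[of "st d x y" y] by simp
qed

lemma liftw_map:
  assumes "\<And>d x y. d \<in> D \<Longrightarrow> st d x y \<in> D \<and> st (c d) x y = c (st d x y)"
  shows "d \<in> D \<Longrightarrow> liftw st (c d) xs = map c (liftw st d xs)"
  using liftw_map_aux[of D st c, OF assms] by (cases xs) auto

lemma prod_set_eq: "{f a b | a b. a \<in> A \<and> b \<in> B} = (\<lambda>(a,b). f a b) ` (A \<times> B)"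
  by auto

lemma finite_prod_set: "finite A \<Longrightarrow> finite B \<Longrightarrow> finite {f a b | a b. a \<in> A \<and> b \<in> B}"
  unfolding prod_set_eq by simp

lemma card_prod_set: "finite A \<Longrightarrow> finite B \<Longrightarrow> card {f a b | a b. a \<in> A \<and> b \<in> B} \<le> card A * card B"
  unfolding prod_set_eq by (metis card_cartesian_product card_image_le finite_cartesian_product)

lemma amen_folner_H:
  assumes grp: "group H" and am: "amenable_group H" and T: "finite T" "T \<subseteq> carrier H"
  shows "\<exists>A. finite A \<and> A \<noteq> {} \<and> A \<subseteq> carrier H \<and>
     card {a \<otimes>\<^bsub>H\<^esub> t | a t. a \<in> A \<and> t \<in> T} \<le> 2 * card A"
proof -
  interpret H: group H by fact
  obtain \<mu> :: "'a set \<Rightarrow> real" where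
    nn: "\<forall>A. A \<subseteq> carrier H \<longrightarrow> \<mu> A \<ge> 0" and one: "\<mu> (carrier H) = 1" and
    add: "\<forall>A B. A \<subseteq> carrier H \<longrightarrow> B \<subseteq> carrier H \<longrightarrow> A \<inter> B = {} \<longrightarrow> \<mu> (A \<union> B) = \<mu> A + \<mu> B" and
    li: "\<forall>g\<in>carrier H. \<forall>A. A \<subseteq> carrier H \<longrightarrow> \<mu> (g <#\<^bsub>H\<^esub> A) = \<mu> A"
    using am unfolding amenable_group_def by (elim exE conjE) (rule that)
  define \<nu> where "\<nu> A = \<mu> (m_inv H ` A)" for A
  have ic: "m_inv H ` A \<subseteq> carrier H" if "A \<subseteq> carrier H" for A using that by auto
  have nn': "\<forall>A. A \<subseteq> carrier H \<longrightarrow> \<nu> A \<ge> 0" using nn ic by (simp add: \<nu>_def)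
  have invc: "m_inv H ` carrier H = carrier H"
  proof
    show "carrier H \<subseteq> m_inv H ` carrier H"
    proof
      fix x assume "x \<in> carrier H"
      hence "x = inv\<^bsub>H\<^esub> (inv\<^bsub>H\<^esub> x)" "inv\<^bsub>H\<^esub> x \<in> carrier H" by auto
      thus "x \<in> m_inv H ` carrier H" by (rule image_eqI)
    qed
  next
    show "m_inv H ` carrier H \<subseteq> carrier H" by (rule ic) simp
  qed
  have one': "\<nu> (carrier H) = 1" unfolding \<nu>_def invc by (rule one)
  have add': "\<forall>A B. A \<subseteq> carrier H \<longrightarrow> B \<subseteq> carrier H \<longrightarrow> A \<inter> B = {} \<longrightarrow> \<nu> (A \<union> B) = \<nu> A + \<nu> B"
  proof (rule allI, rule allI, rule impI, rule impI, rule impI)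
    fix A B assume AB: "A \<subseteq> carrier H" "B \<subseteq> carrier H" "A \<inter> B = {}"
    have "m_inv H ` A \<inter> m_inv H ` B = {}"
    proof -
      have "z \<notin> m_inv H ` B" if za: "z \<in> m_inv H ` A" for z
      proof
        assume zb: "z \<in> m_inv H ` B"
        from za obtain a where a: "a \<in> A" "z = m_inv H a" by (rule imageE)
        from zb obtain b where b: "b \<in> B" "z = m_inv H b" by (rule imageE)
        have ac: "a \<in> carrier H" using subsetD[OF AB(1) a(1)] .
        have bc: "b \<in> carrier H" using subsetD[OF AB(2) b(1)] .
        have ii: "m_inv H a = m_inv H b" using a(2) b(2) by (rule subst)
        have "a = m_inv H (m_inv H a)" using H.inv_inv[OF ac] by (rule sym)
        also have "\<dots> = m_inv H (m_inv H b)" using ii by (rule arg_cong)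
        also have "\<dots> = b" using H.inv_inv[OF bc] .
        finally have "a = b" .
        thus False using a(1) b(1) AB(3) by blast
      qed
      thus ?thesis by (meson disjoint_iff)
    qed
    thus "\<nu> (A \<union> B) = \<nu> A + \<nu> B"
      using add[rule_format, OF ic[OF AB(1)] ic[OF AB(2)]] unfolding \<nu>_def image_Un by blast
  qed
  have ri: "\<forall>g\<in>carrier H. \<forall>A. A \<subseteq> carrier H \<longrightarrow> \<nu> (A #>\<^bsub>H\<^esub> g) = \<nu> A"
  proof (intro ballI allI impI)
    fix g A assume g: "g \<in> carrier H" and A: "A \<subseteq> carrier H"
    have e1: "m_inv H ` (A #>\<^bsub>H\<^esub> g) = (\<lambda>a. inv\<^bsub>H\<^esub> g \<otimes>\<^bsub>H\<^esub> inv\<^bsub>H\<^esub> a) ` A"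
    proof -
      have "m_inv H ` (A #>\<^bsub>H\<^esub> g) = (\<lambda>a. inv\<^bsub>H\<^esub> (a \<otimes>\<^bsub>H\<^esub> g)) ` A"
        unfolding r_coset_def by (simp add: image_UN UN_singleton image_image) (simp add: image_def, blast)
      also have "\<dots> = (\<lambda>a. inv\<^bsub>H\<^esub> g \<otimes>\<^bsub>H\<^esub> inv\<^bsub>H\<^esub> a) ` A"
      proof (rule image_cong[OF refl])
        fix a assume "a \<in> A"
        hence "a \<in> carrier H" using A by blast
        thus "inv\<^bsub>H\<^esub> (a \<otimes>\<^bsub>H\<^esub> g) = inv\<^bsub>H\<^esub> g \<otimes>\<^bsub>H\<^esub> inv\<^bsub>H\<^esub> a"
          using g by (rule H.inv_mult_group)
      qed
      finally show ?thesis .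
    qed
    have e2: "inv\<^bsub>H\<^esub> g <#\<^bsub>H\<^esub> (m_inv H ` A) = (\<lambda>a. inv\<^bsub>H\<^esub> g \<otimes>\<^bsub>H\<^esub> inv\<^bsub>H\<^esub> a) ` A"
      unfolding l_coset_def by (simp add: image_def) blast
    have "m_inv H ` (A #>\<^bsub>H\<^esub> g) = inv\<^bsub>H\<^esub> g <#\<^bsub>H\<^esub> (m_inv H ` A)" using e1 e2 by simp
    thus "\<nu> (A #>\<^bsub>H\<^esub> g) = \<nu> A" using li g A ic by (simp add: \<nu>_def)
  qed
  show ?thesis using H.folner_right[OF nn' one' add' ri T] .
qed

lemma amen_folner_kernel:
  assumes grpH: "group H" and grpG: "group G" and hom: "\<iota> \<in> hom H G" and inj: "inj_on \<iota> (carrier H)"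
    and am: "amenable_group H" and T: "finite T" "T \<subseteq> \<iota> ` carrier H"
  shows "\<exists>A. finite A \<and> A \<noteq> {} \<and> A \<subseteq> \<iota> ` carrier H \<and>
     card {a \<otimes>\<^bsub>G\<^esub> t | a t. a \<in> A \<and> t \<in> T} \<le> 2 * card A"
proof -
  interpret H: group H by fact
  interpret G: group G by fact
  define T0 where "T0 = \<iota> -` T \<inter> carrier H"
  have T0: "finite T0" "T0 \<subseteq> carrier H" using finite_vimage_IntI[OF T(1) inj] by (auto simp: T0_def)
  obtain A0 where A0: "finite A0" "A0 \<noteq> {}" "A0 \<subseteq> carrier H"
    "card {a \<otimes>\<^bsub>H\<^esub> t | a t. a \<in> A0 \<and> t \<in> T0} \<le> 2 * card A0"
    using amen_folner_H[OF grpH am T0] by blast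
  have eq: "{a \<otimes>\<^bsub>G\<^esub> t | a t. a \<in> \<iota> ` A0 \<and> t \<in> T} = \<iota> ` {a \<otimes>\<^bsub>H\<^esub> t | a t. a \<in> A0 \<and> t \<in> T0}"
  proof
    show "{a \<otimes>\<^bsub>G\<^esub> t | a t. a \<in> \<iota> ` A0 \<and> t \<in> T} \<subseteq> \<iota> ` {a \<otimes>\<^bsub>H\<^esub> t | a t. a \<in> A0 \<and> t \<in> T0}"
    proof
      fix y assume "y \<in> {a \<otimes>\<^bsub>G\<^esub> t | a t. a \<in> \<iota> ` A0 \<and> t \<in> T}"
      then obtain a t where at: "y = \<iota> a \<otimes>\<^bsub>G\<^esub> t" "a \<in> A0" "t \<in> T" by auto
      then obtain h where h: "h \<in> carrier H" "t = \<iota> h" using T by auto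
      have "h \<in> T0" using h at by (simp add: T0_def)
      moreover have "y = \<iota> (a \<otimes>\<^bsub>H\<^esub> h)" using at h A0 hom by (simp add: hom_mult subsetD)
      ultimately show "y \<in> \<iota> ` {a \<otimes>\<^bsub>H\<^esub> t | a t. a \<in> A0 \<and> t \<in> T0}" using at by blast
    qed
  next
    show "\<iota> ` {a \<otimes>\<^bsub>H\<^esub> t | a t. a \<in> A0 \<and> t \<in> T0} \<subseteq> {a \<otimes>\<^bsub>G\<^esub> t | a t. a \<in> \<iota> ` A0 \<and> t \<in> T}"
    proof
      fix y assume "y \<in> \<iota> ` {a \<otimes>\<^bsub>H\<^esub> t | a t. a \<in> A0 \<and> t \<in> T0}"
      then obtain a t where at: "y = \<iota> (a \<otimes>\<^bsub>H\<^esub> t)" "a \<in> A0" "t \<in> T0" by auto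
      moreover have "a \<in> carrier H" "t \<in> carrier H" using at A0(3) T0(2) by auto
      ultimately have "y = \<iota> a \<otimes>\<^bsub>G\<^esub> \<iota> t" by (simp add: hom_mult[OF hom])
      moreover have "\<iota> t \<in> T" using at by (simp add: T0_def)
      ultimately show "y \<in> {a \<otimes>\<^bsub>G\<^esub> t | a t. a \<in> \<iota> ` A0 \<and> t \<in> T}" using at by blast
    qed
  qed
  have c1: "card (\<iota> ` A0) = card A0" by (rule card_image[OF inj_on_subset[OF inj A0(3)]])
  have fs: "finite {a \<otimes>\<^bsub>H\<^esub> t | a t. a \<in> A0 \<and> t \<in> T0}" by (rule finite_prod_set[OF A0(1) T0(1)])
  have c2: "card {a \<otimes>\<^bsub>G\<^esub> t | a t. a \<in> \<iota> ` A0 \<and> t \<in> T} \<le> card {a \<otimes>\<^bsub>H\<^esub> t | a t. a \<in> A0 \<and> t \<in> T0}"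
    unfolding eq by (rule card_image_le[OF fs])
  have "card {a \<otimes>\<^bsub>G\<^esub> t | a t. a \<in> \<iota> ` A0 \<and> t \<in> T} \<le> 2 * card (\<iota> ` A0)"
    using c1 c2 A0(4) by linarith
  moreover have "finite (\<iota> ` A0)" "\<iota> ` A0 \<noteq> {}" "\<iota> ` A0 \<subseteq> \<iota> ` carrier H" using A0 by auto
  ultimately show ?thesis by blast
qed

lemma walk_cons_gen: "L \<noteq> [] \<Longrightarrow> is_walk V E (d # L) \<longleftrightarrow> d \<in> V \<and> E d (hd L) \<and> is_walk V E L"
  by (cases L) (auto simp: walk_cons2)

lemma foldl_closed:
  assumes "group G" "set ws \<subseteq> carrier G" "a \<in> carrier G"
  shows "foldl (monoid.mult G) a ws \<in> carrier G"
  using assms(2,3)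
proof (induction ws arbitrary: a)
  case Nil thus ?case by simp
next
  case (Cons s ws)
  have "monoid.mult G a s \<in> carrier G" using Cons.prems group.is_monoid[OF assms(1)] by (simp add: monoid.m_closed)
  thus ?case using Cons by simp
qed

lemma walk_prod:
  assumes grp: "group G" and S: "S \<subseteq> carrier G" and w: "is_walk (carrier G) (cayley_adj G S) xs"
  shows "j < length xs \<Longrightarrow> \<exists>ws. set ws \<subseteq> S \<and> length ws = j \<and>
           xs ! j = hd xs \<otimes>\<^bsub>G\<^esub> foldl (monoid.mult G) \<one>\<^bsub>G\<^esub> ws"
proof (induction j)
  case 0
  interpret G: group G by fact
  have "xs \<noteq> []" using w by (rule walk_nonempty)
  hence "hd xs = xs ! 0" by (simp add: hd_conv_nth)
  moreover have "xs ! 0 \<in> carrier G" using walk_nth[OF w] 0 by simp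
  ultimately show ?case by (intro exI[of _ "[]"]) simp
next
  case (Suc j)
  interpret G: group G by fact
  obtain ws where ws: "set ws \<subseteq> S" "length ws = j" "xs ! j = hd xs \<otimes>\<^bsub>G\<^esub> foldl (monoid.mult G) \<one>\<^bsub>G\<^esub> ws"
    using Suc by auto
  obtain s where s: "s \<in> S" "xs ! Suc j = xs ! j \<otimes>\<^bsub>G\<^esub> s"
    using walk_step[OF w Suc.prems] unfolding cayley_adj_def by blast
  have hc: "hd xs \<in> carrier G" using walk_nth[OF w, of 0] Suc.prems walk_nonempty[OF w] by (simp add: hd_conv_nth)
  have fc: "foldl (monoid.mult G) \<one>\<^bsub>G\<^esub> ws \<in> carrier G" using foldl_closed[OF grp] ws(1) S by auto
  have sc: "s \<in> carrier G" using s(1) S by auto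
  have "xs ! Suc j = hd xs \<otimes>\<^bsub>G\<^esub> foldl (monoid.mult G) \<one>\<^bsub>G\<^esub> (ws @ [s])"
    using s(2) ws(3) hc fc sc by (simp add: G.m_assoc)
  thus ?case using ws s by (intro exI[of _ "ws @ [s]"]) auto
qed

lemma lift_generate:
  assumes grpG: "group G" and grpK: "group K" and hom: "\<pi> \<in> hom G K"
    and sig: "\<forall>s\<in>SK. \<sigma> s \<in> carrier G \<and> \<pi> (\<sigma> s) = s" and SKc: "SK \<subseteq> carrier K"
  shows "x \<in> generate K SK \<Longrightarrow> \<exists>g\<in>generate G (\<sigma> ` SK). \<pi> g = x"
proof (induction rule: generate.induct)
  interpret G: group G by fact
  interpret K: group K by fact
  interpret pi: group_hom G K \<pi> by (unfold_locales) (rule hom)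
  have LLc: "\<sigma> ` SK \<subseteq> carrier G" using sig by auto
  {
    case one
    show ?case by (intro bexI[of _ "\<one>\<^bsub>G\<^esub>"]) (auto intro: generate.one)
  next
    case (incl h)
    show ?case using incl sig by (intro bexI[of _ "\<sigma> h"]) (auto intro: generate.incl)
  next
    case (inv h)
    have "\<pi> (inv\<^bsub>G\<^esub> (\<sigma> h)) = inv\<^bsub>K\<^esub> h" using inv sig by simp
    thus ?case using inv by (intro bexI[of _ "inv\<^bsub>G\<^esub> (\<sigma> h)"]) (auto intro: generate.inv)
  next
    case (eng h1 h2)
    then obtain g1 g2 where g: "g1 \<in> generate G (\<sigma> ` SK)" "\<pi> g1 = h1" "g2 \<in> generate G (\<sigma> ` SK)" "\<pi> g2 = h2"
      by blast
    have "g1 \<in> carrier G" "g2 \<in> carrier G" using g G.generate_in_carrier[OF LLc] by auto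
    hence "\<pi> (g1 \<otimes>\<^bsub>G\<^esub> g2) = h1 \<otimes>\<^bsub>K\<^esub> h2" using g by simp
    thus ?case using g by (intro bexI[of _ "g1 \<otimes>\<^bsub>G\<^esub> g2"]) (auto intro: generate.eng)
  }
qed

lemma walk_last: "is_walk V E xs \<Longrightarrow> last xs \<in> V"
  unfolding is_walk_def using last_in_set by blast

lemma walk_hd: "is_walk V E xs \<Longrightarrow> hd xs \<in> V"
  unfolding is_walk_def using hd_in_set by blast

lemma main_ext:
  assumes grpG: "group \<Gamma>" and grpK: "group K" and hom: "\<pi> \<in> hom \<Gamma> K"
  and SKc: "SK \<subseteq> carrier K" and extK: "extraterrestrial (carrier K) (cayley_adj K SK)"
  and Sc: "S \<subseteq> carrier \<Gamma>" and Spi: "\<forall>s\<in>S. \<pi> s \<in> SK \<or> \<pi> s = \<one>\<^bsub>K\<^esub>"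
  and \<sigma>c: "\<forall>x. \<sigma> x \<in> carrier \<Gamma>" and \<sigma>\<pi>: "\<forall>x\<in>carrier K. \<pi> (\<sigma> x) = x" and \<sigma>S: "\<forall>s\<in>SK. \<sigma> s \<in> S"
  and fol: "\<forall>T. finite T \<and> T \<subseteq> kernel \<Gamma> K \<pi> \<longrightarrow> (\<exists>A. finite A \<and> A \<noteq> {} \<and> A \<subseteq> kernel \<Gamma> K \<pi> \<and>
              card {a \<otimes>\<^bsub>\<Gamma>\<^esub> t | a t. a \<in> A \<and> t \<in> T} \<le> 2 * card A)"
  and Sfin: "finite S"
  shows "extraterrestrial (carrier \<Gamma>) (cayley_adj \<Gamma> S)"
proof -
  interpret G: group \<Gamma> by fact
  interpret K: group K by fact
  interpret pi: group_hom \<Gamma> K \<pi> by (unfold_locales) (rule hom)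
  define st where "st d x y = d \<otimes>\<^bsub>\<Gamma>\<^esub> \<sigma> (inv\<^bsub>K\<^esub> x \<otimes>\<^bsub>K\<^esub> y)" for d x y
  have stc: "st d x y \<in> carrier \<Gamma>" if "d \<in> carrier \<Gamma>" for d x y using that \<sigma>c by (simp add: st_def)
  have liftwalk: "is_walk (carrier \<Gamma>) (cayley_adj \<Gamma> S) (liftw st d p) \<and>
      \<pi> (last (liftw st d p)) = \<pi> d \<otimes>\<^bsub>K\<^esub> (inv\<^bsub>K\<^esub> (hd p) \<otimes>\<^bsub>K\<^esub> last p)"
    if "is_walk (carrier K) (cayley_adj K SK) p" "d \<in> carrier \<Gamma>" for p d
    using that
  proof (induction p arbitrary: d)
    case Nil thus ?case by (simp add: is_walk_def)
  next
    case (Cons x r)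
    note prems = Cons.prems and IH0 = Cons.IH
    show ?case
    proof (cases r)
      case Nil
      have "x \<in> carrier K" using Cons.prems Nil by simp
      thus ?thesis using Cons.prems Nil by simp
    next
      case (Cons y r')
      note Cons2 = this
      have w: "x \<in> carrier K" "cayley_adj K SK x y" "is_walk (carrier K) (cayley_adj K SK) (y # r')"
        using prems(1) Cons2 by (auto simp: walk_cons2)
      obtain s where s: "s \<in> SK" "y = x \<otimes>\<^bsub>K\<^esub> s" using w(2) unfolding cayley_adj_def by blast
      have sc: "s \<in> carrier K" using s SKc by auto
      have yc: "y \<in> carrier K" using s sc w(1) by simp
      have ixy: "inv\<^bsub>K\<^esub> x \<otimes>\<^bsub>K\<^esub> y = s" using s(2) w(1) sc by (simp add: K.m_assoc[symmetric])
      define d' where "d' = st d x y"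
      have d'eq: "d' = d \<otimes>\<^bsub>\<Gamma>\<^esub> \<sigma> s" by (simp add: d'_def st_def ixy)
      have d'c: "d' \<in> carrier \<Gamma>" using stc prems(2) by (simp add: d'_def)
      have IH: "is_walk (carrier \<Gamma>) (cayley_adj \<Gamma> S) (liftw st d' (y # r')) \<and>
          \<pi> (last (liftw st d' (y # r'))) = \<pi> d' \<otimes>\<^bsub>K\<^esub> (inv\<^bsub>K\<^esub> y \<otimes>\<^bsub>K\<^esub> last (y # r'))"
        using IH0[OF _ d'c] w(3) Cons2 by simp
      have eqL: "liftw st d (x # r) = d # liftw st d' (y # r')" by (simp add: Cons2 d'_def)
      have ne: "liftw st d' (y # r') \<noteq> []" by (rule liftw_ne)
      have adj: "cayley_adj \<Gamma> S d d'" unfolding cayley_adj_def d'eq using \<sigma>S s(1) by blast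
      have walk: "is_walk (carrier \<Gamma>) (cayley_adj \<Gamma> S) (liftw st d (x # r))"
        unfolding eqL walk_cons_gen[OF ne] using prems(2) adj IH by simp
      have lc: "last (y # r') \<in> carrier K" using walk_last[OF w(3)] .
      have pd: "\<pi> d \<in> carrier K" using prems(2) by simp
      have "\<pi> (last (liftw st d (x # r))) = \<pi> d' \<otimes>\<^bsub>K\<^esub> (inv\<^bsub>K\<^esub> y \<otimes>\<^bsub>K\<^esub> last (y # r'))"
        using IH ne eqL by simp
      also have "\<pi> d' = \<pi> d \<otimes>\<^bsub>K\<^esub> s" using d'eq prems(2) \<sigma>c \<sigma>\<pi> sc by simp
      also have "inv\<^bsub>K\<^esub> y = inv\<^bsub>K\<^esub> s \<otimes>\<^bsub>K\<^esub> inv\<^bsub>K\<^esub> x" using s(2) w(1) sc by (simp add: K.inv_mult_group)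
      also have "\<pi> d \<otimes>\<^bsub>K\<^esub> s \<otimes>\<^bsub>K\<^esub> (inv\<^bsub>K\<^esub> s \<otimes>\<^bsub>K\<^esub> inv\<^bsub>K\<^esub> x \<otimes>\<^bsub>K\<^esub> last (y # r'))
          = \<pi> d \<otimes>\<^bsub>K\<^esub> (inv\<^bsub>K\<^esub> x \<otimes>\<^bsub>K\<^esub> last (y # r'))"
      proof -
        define l where "l = last (y # r')"
        have lc': "l \<in> carrier K" using lc by (simp add: l_def)
        have c: "s \<otimes>\<^bsub>K\<^esub> (inv\<^bsub>K\<^esub> s \<otimes>\<^bsub>K\<^esub> z) = z" if "z \<in> carrier K" for z
          using that sc by (simp add: K.m_assoc[symmetric])
        have "\<pi> d \<otimes>\<^bsub>K\<^esub> s \<otimes>\<^bsub>K\<^esub> (inv\<^bsub>K\<^esub> s \<otimes>\<^bsub>K\<^esub> inv\<^bsub>K\<^esub> x \<otimes>\<^bsub>K\<^esub> l)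
          = \<pi> d \<otimes>\<^bsub>K\<^esub> (s \<otimes>\<^bsub>K\<^esub> (inv\<^bsub>K\<^esub> s \<otimes>\<^bsub>K\<^esub> (inv\<^bsub>K\<^esub> x \<otimes>\<^bsub>K\<^esub> l)))"
          using pd sc w(1) lc' by (simp add: K.m_assoc)
        also have "\<dots> = \<pi> d \<otimes>\<^bsub>K\<^esub> (inv\<^bsub>K\<^esub> x \<otimes>\<^bsub>K\<^esub> l)" using c w(1) lc' by simp
        finally show ?thesis by (simp add: l_def)
      qed
      also have "last (y # r') = last (x # r)" using Cons2 by simp
      finally show ?thesis using walk by simp
    qed
  qed
  have kerD: "g \<in> carrier \<Gamma> \<and> \<pi> g = \<one>\<^bsub>K\<^esub>" if "g \<in> kernel \<Gamma> K \<pi>" for g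
    using that by (simp add: kernel_def)
  have kerI: "g \<in> kernel \<Gamma> K \<pi>" if "g \<in> carrier \<Gamma>" "\<pi> g = \<one>\<^bsub>K\<^esub>" for g
    using that by (simp add: kernel_def)
  show ?thesis unfolding extraterrestrial_def
  proof (intro allI)
    fix m :: nat
    obtain k where kK: "\<forall>r. \<exists>U F W.
       U \<subseteq> carrier K \<and> F \<subseteq> carrier K \<and> W \<subseteq> carrier K \<and>
       finite U \<and> finite F \<and> finite W \<and>
       U \<inter> F = {} \<and> U \<inter> W = {} \<and> F \<inter> W = {} \<and>
       U \<noteq> {} \<and> card U \<ge> (2 * m) * card F \<and>
       (\<exists>\<mu>. bij_betw \<mu> U W \<and> (\<forall>u\<in>U. dist_le (carrier K) (cayley_adj K SK) u (\<mu> u) k)) \<and>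
       (\<forall>xs. is_walk (carrier K) (cayley_adj K SK) xs \<and> hd xs \<in> U \<and> last xs \<in> W \<longrightarrow>
              set xs \<inter> F \<noteq> {} \<or> walk_len xs \<ge> r)"
      using extK unfolding extraterrestrial_def by (erule_tac x="2 * m" in allE) (erule exE, rule that)
    show "\<exists>k. \<forall>r. \<exists>U F W.
       U \<subseteq> carrier \<Gamma> \<and> F \<subseteq> carrier \<Gamma> \<and> W \<subseteq> carrier \<Gamma> \<and>
       finite U \<and> finite F \<and> finite W \<and>
       U \<inter> F = {} \<and> U \<inter> W = {} \<and> F \<inter> W = {} \<and>
       U \<noteq> {} \<and> card U \<ge> m * card F \<and>
       (\<exists>\<mu>. bij_betw \<mu> U W \<and> (\<forall>u\<in>U. dist_le (carrier \<Gamma>) (cayley_adj \<Gamma> S) u (\<mu> u) k)) \<and>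
       (\<forall>xs. is_walk (carrier \<Gamma>) (cayley_adj \<Gamma> S) xs \<and> hd xs \<in> U \<and> last xs \<in> W \<longrightarrow>
              set xs \<inter> F \<noteq> {} \<or> walk_len xs \<ge> r)"
    proof (intro exI[of _ k] allI)
      fix r :: nat
      obtain U F W \<mu> where
        U: "U \<subseteq> carrier K" "finite U" "U \<noteq> {}" and
        F: "F \<subseteq> carrier K" "finite F" and
        W: "W \<subseteq> carrier K" "finite W" and
        dj: "U \<inter> F = {}" "U \<inter> W = {}" "F \<inter> W = {}" and
        cd: "card U \<ge> (2 * m) * card F" and
        bij: "bij_betw \<mu> U W" and
        dst: "\<forall>u\<in>U. dist_le (carrier K) (cayley_adj K SK) u (\<mu> u) k" and
        blk: "\<forall>xs. is_walk (carrier K) (cayley_adj K SK) xs \<and> hd xs \<in> U \<and> last xs \<in> W \<longrightarrow>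
              set xs \<inter> F \<noteq> {} \<or> walk_len xs \<ge> r"
        using kK[rule_format, of r] by (elim exE conjE) (rule that; assumption)
      define p where "p u = (SOME xs. is_walk (carrier K) (cayley_adj K SK) xs \<and> hd xs = u \<and> last xs = \<mu> u \<and> walk_len xs \<le> k)" for u
      have p: "is_walk (carrier K) (cayley_adj K SK) (p u) \<and> hd (p u) = u \<and> last (p u) = \<mu> u \<and> walk_len (p u) \<le> k"
        if "u \<in> U" for u
      proof -
        have "\<exists>xs. is_walk (carrier K) (cayley_adj K SK) xs \<and> hd xs = u \<and> last xs = \<mu> u \<and> walk_len xs \<le> k"
          using dst that unfolding dist_le_def by blast
        thus ?thesis unfolding p_def by (rule someI_ex)
      qed
      define P where "P = (\<lambda>ws. foldl (monoid.mult \<Gamma>) \<one>\<^bsub>\<Gamma>\<^esub> ws) ` {ws. set ws \<subseteq> S \<and> length ws \<le> r}"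
      have Pfin: "finite P" unfolding P_def using finite_lists_length_le[OF Sfin] by simp
      have Pc: "w \<in> carrier \<Gamma>" if "w \<in> P" for w
        using that Sc foldl_closed[OF grpG] unfolding P_def by auto
      define \<tau> where "\<tau> u w = \<sigma> u \<otimes>\<^bsub>\<Gamma>\<^esub> w \<otimes>\<^bsub>\<Gamma>\<^esub> inv\<^bsub>\<Gamma>\<^esub> (\<sigma> (u \<otimes>\<^bsub>K\<^esub> \<pi> w))" for u w
      define T where "T = {\<tau> u w | u w. u \<in> U \<and> w \<in> P}"
      have Tfin: "finite T" unfolding T_def using finite_prod_set[OF U(2) Pfin] .
      have \<tau>ker: "\<tau> u w \<in> kernel \<Gamma> K \<pi>" if "u \<in> U" "w \<in> P" for u w
      proof (rule kerI)
        have uc: "u \<in> carrier K" using that U by auto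
        have wc: "w \<in> carrier \<Gamma>" using Pc that by auto
        show "\<tau> u w \<in> carrier \<Gamma>" using \<sigma>c wc by (simp add: \<tau>_def)
        have "\<pi> (\<tau> u w) = u \<otimes>\<^bsub>K\<^esub> \<pi> w \<otimes>\<^bsub>K\<^esub> inv\<^bsub>K\<^esub> (u \<otimes>\<^bsub>K\<^esub> \<pi> w)"
          using \<sigma>c wc uc \<sigma>\<pi> by (simp add: \<tau>_def)
        thus "\<pi> (\<tau> u w) = \<one>\<^bsub>K\<^esub>" using uc wc by simp
      qed
      have Tker: "T \<subseteq> kernel \<Gamma> K \<pi>" unfolding T_def using \<tau>ker by blast
      obtain A where A: "finite A" "A \<noteq> {}" "A \<subseteq> kernel \<Gamma> K \<pi>"
        "card {a \<otimes>\<^bsub>\<Gamma>\<^esub> t | a t. a \<in> A \<and> t \<in> T} \<le> 2 * card A"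
        using fol Tfin Tker by blast
      have Ac: "a \<in> carrier \<Gamma>" "\<pi> a = \<one>\<^bsub>K\<^esub>" if "a \<in> A" for a using A(3) that kerD by auto
      define gu where "gu u = last (liftw st \<one>\<^bsub>\<Gamma>\<^esub> (p u))" for u
      have gu: "gu u \<in> carrier \<Gamma> \<and> \<pi> (gu u) = inv\<^bsub>K\<^esub> u \<otimes>\<^bsub>K\<^esub> \<mu> u" if "u \<in> U" for u
      proof -
        have lw: "is_walk (carrier \<Gamma>) (cayley_adj \<Gamma> S) (liftw st \<one>\<^bsub>\<Gamma>\<^esub> (p u)) \<and>
          \<pi> (last (liftw st \<one>\<^bsub>\<Gamma>\<^esub> (p u))) = \<pi> \<one>\<^bsub>\<Gamma>\<^esub> \<otimes>\<^bsub>K\<^esub> (inv\<^bsub>K\<^esub> (hd (p u)) \<otimes>\<^bsub>K\<^esub> last (p u))"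
          using liftwalk p[OF that] by blast
        have "u \<in> carrier K" "\<mu> u \<in> carrier K" using that U bij W bij_betwE by blast+
        thus ?thesis using lw walk_last[of "carrier \<Gamma>"] p[OF that] unfolding gu_def by auto
      qed
      define \<mu>' where "\<mu>' \<gamma> = \<gamma> \<otimes>\<^bsub>\<Gamma>\<^esub> gu (\<pi> \<gamma>)" for \<gamma>
      define U' where "U' = {a \<otimes>\<^bsub>\<Gamma>\<^esub> \<sigma> u | a u. a \<in> A \<and> u \<in> U}"
      define AT where "AT = {a \<otimes>\<^bsub>\<Gamma>\<^esub> t | a t. a \<in> A \<and> t \<in> T}"
      define F' where "F' = {b \<otimes>\<^bsub>\<Gamma>\<^esub> \<sigma> f | b f. b \<in> AT \<and> f \<in> F}"
      define W' where "W' = \<mu>' ` U'"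
      have ATc: "b \<in> carrier \<Gamma> \<and> \<pi> b = \<one>\<^bsub>K\<^esub>" if hb: "b \<in> AT" for b
      proof -
        obtain a t where at: "b = a \<otimes>\<^bsub>\<Gamma>\<^esub> t" "a \<in> A" "t \<in> T" using hb unfolding AT_def by blast
        have "t \<in> carrier \<Gamma>" "\<pi> t = \<one>\<^bsub>K\<^esub>" using at(3) Tker kerD by auto
        thus ?thesis using at Ac by simp
      qed
      have U'D: "\<gamma> \<in> carrier \<Gamma> \<and> \<pi> \<gamma> \<in> U" if hg: "\<gamma> \<in> U'" for \<gamma>
      proof -
        obtain a u where au: "\<gamma> = a \<otimes>\<^bsub>\<Gamma>\<^esub> \<sigma> u" "a \<in> A" "u \<in> U" using hg unfolding U'_def by blast
        have "u \<in> carrier K" using au U by auto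
        thus ?thesis using au Ac \<sigma>c \<sigma>\<pi> by simp
      qed
      have F'D: "\<gamma> \<in> carrier \<Gamma> \<and> \<pi> \<gamma> \<in> F" if hg: "\<gamma> \<in> F'" for \<gamma>
      proof -
        obtain b f where bf: "\<gamma> = b \<otimes>\<^bsub>\<Gamma>\<^esub> \<sigma> f" "b \<in> AT" "f \<in> F" using hg unfolding F'_def by blast
        have "f \<in> carrier K" using bf F by auto
        thus ?thesis using bf ATc \<sigma>c \<sigma>\<pi> by simp
      qed
      have \<mu>'D: "\<mu>' \<gamma> \<in> carrier \<Gamma> \<and> \<pi> (\<mu>' \<gamma>) = \<mu> (\<pi> \<gamma>)" if "\<gamma> \<in> U'" for \<gamma>
      proof -
        have g: "\<gamma> \<in> carrier \<Gamma>" "\<pi> \<gamma> \<in> U" using U'D that by auto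
        have uc: "\<pi> \<gamma> \<in> carrier K" using g(2) U(1) by blast
        have mW: "\<mu> (\<pi> \<gamma>) \<in> W" using bij_betwE[OF bij] g(2) by blast
        have mc: "\<mu> (\<pi> \<gamma>) \<in> carrier K" using mW W(1) by blast
        have gg: "gu (\<pi> \<gamma>) \<in> carrier \<Gamma>" "\<pi> (gu (\<pi> \<gamma>)) = inv\<^bsub>K\<^esub> (\<pi> \<gamma>) \<otimes>\<^bsub>K\<^esub> \<mu> (\<pi> \<gamma>)"
          using gu[OF g(2)] by auto
        have "\<pi> (\<mu>' \<gamma>) = \<pi> \<gamma> \<otimes>\<^bsub>K\<^esub> \<pi> (gu (\<pi> \<gamma>))" unfolding \<mu>'_def using g(1) gg(1) by (rule pi.hom_mult)
        also have "\<dots> = \<pi> \<gamma> \<otimes>\<^bsub>K\<^esub> (inv\<^bsub>K\<^esub> (\<pi> \<gamma>) \<otimes>\<^bsub>K\<^esub> \<mu> (\<pi> \<gamma>))" using gg(2) by simp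
        also have "\<dots> = \<mu> (\<pi> \<gamma>)" using uc mc by (simp add: K.m_assoc[symmetric])
        finally show ?thesis using g(1) gg(1) unfolding \<mu>'_def by simp
      qed
      have W'D: "\<gamma> \<in> carrier \<Gamma> \<and> \<pi> \<gamma> \<in> W" if hg: "\<gamma> \<in> W'" for \<gamma>
      proof -
        obtain \<delta> where d: "\<delta> \<in> U'" "\<gamma> = \<mu>' \<delta>" using hg unfolding W'_def by blast
        have "\<pi> \<delta> \<in> U" using U'D d(1) by blast
        hence "\<mu> (\<pi> \<delta>) \<in> W" using bij_betwE[OF bij] by blast
        thus ?thesis using \<mu>'D[OF d(1)] d(2) by simp
      qed
      show "\<exists>U F W.
       U \<subseteq> carrier \<Gamma> \<and> F \<subseteq> carrier \<Gamma> \<and> W \<subseteq> carrier \<Gamma> \<and>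
       finite U \<and> finite F \<and> finite W \<and>
       U \<inter> F = {} \<and> U \<inter> W = {} \<and> F \<inter> W = {} \<and>
       U \<noteq> {} \<and> card U \<ge> m * card F \<and>
       (\<exists>\<mu>. bij_betw \<mu> U W \<and> (\<forall>u\<in>U. dist_le (carrier \<Gamma>) (cayley_adj \<Gamma> S) u (\<mu> u) k)) \<and>
       (\<forall>xs. is_walk (carrier \<Gamma>) (cayley_adj \<Gamma> S) xs \<and> hd xs \<in> U \<and> last xs \<in> W \<longrightarrow>
              set xs \<inter> F \<noteq> {} \<or> walk_len xs \<ge> r)"
      proof (rule exI[of _ U'], rule exI[of _ F'], rule exI[of _ W'], intro conjI)
        show "U' \<subseteq> carrier \<Gamma>" using U'D by blast
        show "F' \<subseteq> carrier \<Gamma>" using F'D by blast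
        show "W' \<subseteq> carrier \<Gamma>" using W'D by blast
        show fU': "finite U'" unfolding U'_def by (rule finite_prod_set[OF A(1) U(2)])
        have fAT: "finite AT" unfolding AT_def by (rule finite_prod_set[OF A(1) Tfin])
        show "finite F'" unfolding F'_def by (rule finite_prod_set[OF fAT F(2)])
        show "finite W'" unfolding W'_def using fU' by simp
        show "U' \<inter> F' = {}" using U'D F'D dj(1) by blast
        show "U' \<inter> W' = {}" using U'D W'D dj(2) by blast
        show "F' \<inter> W' = {}" using F'D W'D dj(3) by blast
        show "U' \<noteq> {}" using A(2) U(3) unfolding U'_def by blast
        show "card U' \<ge> m * card F'"
        proof -
          have inj: "inj_on (\<lambda>(a,u). a \<otimes>\<^bsub>\<Gamma>\<^esub> \<sigma> u) (A \<times> U)"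
          proof (rule inj_onI)
            fix x y assume x: "x \<in> A \<times> U" and y: "y \<in> A \<times> U"
              and e: "(\<lambda>(a,u). a \<otimes>\<^bsub>\<Gamma>\<^esub> \<sigma> u) x = (\<lambda>(a,u). a \<otimes>\<^bsub>\<Gamma>\<^esub> \<sigma> u) y"
            obtain a u where au: "x = (a,u)" "a \<in> A" "u \<in> U" using x by blast
            obtain a' u' where au': "y = (a',u')" "a' \<in> A" "u' \<in> U" using y by blast
            have e': "a \<otimes>\<^bsub>\<Gamma>\<^esub> \<sigma> u = a' \<otimes>\<^bsub>\<Gamma>\<^esub> \<sigma> u'" using e au au' by simp
            have uc: "u \<in> carrier K" "u' \<in> carrier K" using au au' U by auto
            have "\<pi> (a \<otimes>\<^bsub>\<Gamma>\<^esub> \<sigma> u) = u" using Ac[OF au(2)] \<sigma>c \<sigma>\<pi> uc by simp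
            moreover have "\<pi> (a' \<otimes>\<^bsub>\<Gamma>\<^esub> \<sigma> u') = u'" using Ac[OF au'(2)] \<sigma>c \<sigma>\<pi> uc by simp
            ultimately have uu: "u = u'" using e' by simp
            hence "a = a'" using e' Ac[OF au(2)] Ac[OF au'(2)] \<sigma>c by simp
            thus "x = y" using au au' uu by simp
          qed
          have cU: "card U' = card A * card U"
            unfolding U'_def prod_set_eq card_image[OF inj] card_cartesian_product ..
          have cAT: "card AT \<le> 2 * card A" using A(4) unfolding AT_def .
          have cF: "card F' \<le> card AT * card F" unfolding F'_def by (rule card_prod_set[OF fAT F(2)])
          have "m * card F' \<le> m * (card AT * card F)" using cF by simp
          also have "\<dots> \<le> m * (2 * card A * card F)" using cAT by simp
          also have "\<dots> = card A * (2 * m * card F)" by simp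
          also have "\<dots> \<le> card A * card U" using cd by simp
          finally show ?thesis using cU by simp
        qed
        show "\<exists>\<mu>. bij_betw \<mu> U' W' \<and> (\<forall>u\<in>U'. dist_le (carrier \<Gamma>) (cayley_adj \<Gamma> S) u (\<mu> u) k)"
        proof (rule exI[of _ \<mu>'], rule conjI)
          have "inj_on \<mu>' U'"
          proof (rule inj_onI)
            fix g1 g2 assume g: "g1 \<in> U'" "g2 \<in> U'" "\<mu>' g1 = \<mu>' g2"
            have "\<mu> (\<pi> g1) = \<mu> (\<pi> g2)" using \<mu>'D[OF g(1)] \<mu>'D[OF g(2)] g(3) by simp
            hence pe: "\<pi> g1 = \<pi> g2" using bij_betw_imp_inj_on[OF bij] U'D g(1,2) by (meson inj_onD)
            have "gu (\<pi> g1) \<in> carrier \<Gamma>" using gu U'D g(1) by blast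
            moreover have "g1 \<otimes>\<^bsub>\<Gamma>\<^esub> gu (\<pi> g1) = g2 \<otimes>\<^bsub>\<Gamma>\<^esub> gu (\<pi> g1)" using g(3) pe unfolding \<mu>'_def by simp
            ultimately show "g1 = g2" using U'D g(1,2) by simp
          qed
          thus "bij_betw \<mu>' U' W'" unfolding W'_def by (rule inj_on_imp_bij_betw)
          show "\<forall>u\<in>U'. dist_le (carrier \<Gamma>) (cayley_adj \<Gamma> S) u (\<mu>' u) k"
          proof
            fix \<gamma> assume g: "\<gamma> \<in> U'"
            define u where "u = \<pi> \<gamma>"
            have gc: "\<gamma> \<in> carrier \<Gamma>" and uU: "u \<in> U" using U'D g by (auto simp: u_def)
            have pu: "is_walk (carrier K) (cayley_adj K SK) (p u)" "walk_len (p u) \<le> k" using p[OF uU] by auto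
            have lw: "is_walk (carrier \<Gamma>) (cayley_adj \<Gamma> S) (liftw st \<gamma> (p u))"
              using liftwalk[OF pu(1) gc] by blast
            have mp: "liftw st (\<gamma> \<otimes>\<^bsub>\<Gamma>\<^esub> \<one>\<^bsub>\<Gamma>\<^esub>) (p u) = map (\<lambda>d. \<gamma> \<otimes>\<^bsub>\<Gamma>\<^esub> d) (liftw st \<one>\<^bsub>\<Gamma>\<^esub> (p u))"
            proof (rule liftw_map[of "carrier \<Gamma>"])
              fix d x y assume "d \<in> carrier \<Gamma>"
              thus "st d x y \<in> carrier \<Gamma> \<and> st (\<gamma> \<otimes>\<^bsub>\<Gamma>\<^esub> d) x y = \<gamma> \<otimes>\<^bsub>\<Gamma>\<^esub> st d x y"
                using gc \<sigma>c stc by (simp add: st_def G.m_assoc)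
            qed simp
            have "last (liftw st \<gamma> (p u)) = \<gamma> \<otimes>\<^bsub>\<Gamma>\<^esub> gu u"
              using mp gc liftw_ne[of st "\<one>\<^bsub>\<Gamma>\<^esub>" "p u"] unfolding gu_def by (simp add: last_map)
            hence la: "last (liftw st \<gamma> (p u)) = \<mu>' \<gamma>" by (simp add: \<mu>'_def u_def)
            have "walk_len (liftw st \<gamma> (p u)) = walk_len (p u)"
              using liftw_len[OF walk_nonempty[OF pu(1)], of st \<gamma>] by (simp add: walk_len_def)
            thus "dist_le (carrier \<Gamma>) (cayley_adj \<Gamma> S) \<gamma> (\<mu>' \<gamma>) k"
              unfolding dist_le_def using lw la pu(2) by (intro exI[of _ "liftw st \<gamma> (p u)"]) simp
          qed
        qed
        show "\<forall>xs. is_walk (carrier \<Gamma>) (cayley_adj \<Gamma> S) xs \<and> hd xs \<in> U' \<and> last xs \<in> W' \<longrightarrow>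
              set xs \<inter> F' \<noteq> {} \<or> walk_len xs \<ge> r"
        proof (intro allI impI)
          fix xs assume h: "is_walk (carrier \<Gamma>) (cayley_adj \<Gamma> S) xs \<and> hd xs \<in> U' \<and> last xs \<in> W'"
          have wx: "is_walk (carrier \<Gamma>) (cayley_adj \<Gamma> S) xs" and hx: "hd xs \<in> U'" and lx: "last xs \<in> W'"
            using h by auto
          have xne: "xs \<noteq> []" using walk_nonempty[OF wx] .
          show "set xs \<inter> F' \<noteq> {} \<or> walk_len xs \<ge> r"
          proof (rule ccontr)
            assume "\<not> (set xs \<inter> F' \<noteq> {} \<or> walk_len xs \<ge> r)"
            hence nF: "set xs \<inter> F' = {}" and lt: "walk_len xs < r" by auto
            define E' where "E' x y = (cayley_adj K SK x y \<or> x = y)" for x y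
            have wm: "is_walk (carrier K) E' (map \<pi> xs)"
            proof (rule walk_map[OF wx])
              fix x assume "x \<in> carrier \<Gamma>" thus "\<pi> x \<in> carrier K" by simp
            next
              fix x y assume xy: "x \<in> carrier \<Gamma>" "y \<in> carrier \<Gamma>" "cayley_adj \<Gamma> S x y"
              obtain s where s: "s \<in> S" "y = x \<otimes>\<^bsub>\<Gamma>\<^esub> s" using xy(3) unfolding cayley_adj_def by blast
              have sc: "s \<in> carrier \<Gamma>" using s Sc by auto
              have py: "\<pi> y = \<pi> x \<otimes>\<^bsub>K\<^esub> \<pi> s" using s(2) xy(1) sc by simp
              show "E' (\<pi> x) (\<pi> y)"
              proof (cases "\<pi> s \<in> SK")
                case True thus ?thesis using py unfolding E'_def cayley_adj_def by blast
              next
                case False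
                hence "\<pi> s = \<one>\<^bsub>K\<^esub>" using Spi s(1) by blast
                thus ?thesis using py xy(1) unfolding E'_def by simp
              qed
            qed
            define ys where "ys = remdups_adj (map \<pi> xs)"
            have wy: "is_walk (carrier K) (cayley_adj K SK) ys"
              unfolding ys_def by (rule walk_remdups[OF _ wm]) (simp add: E'_def)
            have hy: "hd ys \<in> U" using U'D[OF hx] xne by (simp add: ys_def hd_map)
            have ly: "last ys \<in> W" using W'D[OF lx] xne by (simp add: ys_def last_map)
            have "walk_len ys \<le> walk_len (map \<pi> xs)" unfolding ys_def by (rule walk_len_remdups)
            hence "walk_len ys < r" using lt by (simp add: walk_len_def)
            hence "set ys \<inter> F \<noteq> {}" using blk wy hy ly by auto
            then obtain z where z: "z \<in> set xs" "\<pi> z \<in> F" by (auto simp: ys_def)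
            then obtain j where j: "j < length xs" "xs ! j = z" by (meson in_set_conv_nth)
            obtain ws where ws: "set ws \<subseteq> S" "length ws = j"
              "xs ! j = hd xs \<otimes>\<^bsub>\<Gamma>\<^esub> foldl (monoid.mult \<Gamma>) \<one>\<^bsub>\<Gamma>\<^esub> ws"
              using walk_prod[OF grpG Sc wx j(1)] by blast
            define w where "w = foldl (monoid.mult \<Gamma>) \<one>\<^bsub>\<Gamma>\<^esub> ws"
            have "length ws \<le> r" using ws(2) j(1) lt by (simp add: walk_len_def)
            hence wP: "w \<in> P" unfolding P_def w_def using ws(1) by blast
            have wc: "w \<in> carrier \<Gamma>" using Pc[OF wP] .
            obtain a u where au: "hd xs = a \<otimes>\<^bsub>\<Gamma>\<^esub> \<sigma> u" "a \<in> A" "u \<in> U" using hx unfolding U'_def by blast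
            have ac: "a \<in> carrier \<Gamma>" "\<pi> a = \<one>\<^bsub>K\<^esub>" using Ac[OF au(2)] by auto
            have uc: "u \<in> carrier K" using au(3) U by auto
            have zeq: "z = a \<otimes>\<^bsub>\<Gamma>\<^esub> \<sigma> u \<otimes>\<^bsub>\<Gamma>\<^esub> w" using ws(3) j(2) au(1) by (simp add: w_def)
            define f where "f = \<pi> z"
            have fF: "f \<in> F" using z(2) by (simp add: f_def)
            have feq: "f = u \<otimes>\<^bsub>K\<^esub> \<pi> w" using zeq ac \<sigma>c \<sigma>\<pi> uc wc by (simp add: f_def)
            have "(a \<otimes>\<^bsub>\<Gamma>\<^esub> \<tau> u w) \<otimes>\<^bsub>\<Gamma>\<^esub> \<sigma> f = z"
              unfolding zeq \<tau>_def feq[symmetric] using ac \<sigma>c wc by (simp add: G.m_assoc)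
            moreover have "a \<otimes>\<^bsub>\<Gamma>\<^esub> \<tau> u w \<in> AT" unfolding AT_def T_def using au(2,3) wP by blast
            ultimately have "z \<in> F'" unfolding F'_def using fF by blast
            thus False using nF z(1) by blast
          qed
        qed
      qed
    qed
  qed
qed

theorem mainTheorem8:
  fixes H :: "('h, 'c) monoid_scheme" and \<Gamma> :: "('g, 'd) monoid_scheme"
    and K :: "('k, 'e) monoid_scheme" and \<iota> :: "'h \<Rightarrow> 'g" and \<pi> :: "'g \<Rightarrow> 'k"
  assumes "group H" and "group \<Gamma>" and "group K"
    and "\<iota> \<in> hom H \<Gamma>" and "inj_on \<iota> (carrier H)"
    and "\<pi> \<in> hom \<Gamma> K" and "\<pi> ` carrier \<Gamma> = carrier K"
    and "\<iota> ` carrier H = kernel \<Gamma> K \<pi>"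
    and "amenable_group H"
    and "finitely_generated_group \<Gamma>"
    and "extraterrestrial_group K"
  shows "extraterrestrial_group \<Gamma>"
proof -
  note grpH = assms(1) and grpG = assms(2) and grpK = assms(3) and hom\<iota> = assms(4)
    and inj = assms(5) and hom = assms(6) and surj = assms(7) and ker = assms(8)
    and am = assms(9) and fg = assms(10) and etK = assms(11)
  interpret G: group \<Gamma> by fact
  interpret K: group K by fact
  interpret pi: group_hom \<Gamma> K \<pi> by (unfold_locales) (rule hom)
  obtain SK where SK: "finite_symmetric_generating_set K SK" "extraterrestrial (carrier K) (cayley_adj K SK)"
    using etK unfolding extraterrestrial_group_def by blast
  have SKc: "SK \<subseteq> carrier K" and SKsym: "\<forall>s\<in>SK. inv\<^bsub>K\<^esub> s \<in> SK" and SKgen: "generate K SK = carrier K"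
    using SK(1) unfolding finite_symmetric_generating_set_def by auto
  obtain S0 where S0: "finite S0" "S0 \<subseteq> carrier \<Gamma>" "generate \<Gamma> S0 = carrier \<Gamma>"
    using fg unfolding finitely_generated_group_def by blast
  define \<sigma> where "\<sigma> x = (if x \<in> carrier K then (SOME g. g \<in> carrier \<Gamma> \<and> \<pi> g = x) else \<one>\<^bsub>\<Gamma>\<^esub>)" for x
  have \<sigma>1: "\<sigma> x \<in> carrier \<Gamma> \<and> \<pi> (\<sigma> x) = x" if "x \<in> carrier K" for x
  proof -
    have "x \<in> \<pi> ` carrier \<Gamma>" using surj that by simp
    hence "\<exists>g. g \<in> carrier \<Gamma> \<and> \<pi> g = x" by blast
    hence "(SOME g. g \<in> carrier \<Gamma> \<and> \<pi> g = x) \<in> carrier \<Gamma> \<and> \<pi> (SOME g. g \<in> carrier \<Gamma> \<and> \<pi> g = x) = x"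
      by (rule someI_ex)
    thus ?thesis using that by (simp add: \<sigma>_def)
  qed
  have \<sigma>c: "\<forall>x. \<sigma> x \<in> carrier \<Gamma>" using \<sigma>1 by (simp add: \<sigma>_def)
  have \<sigma>\<pi>: "\<forall>x\<in>carrier K. \<pi> (\<sigma> x) = x" using \<sigma>1 by blast
  define LL where "LL = \<sigma> ` SK"
  have LLc: "LL \<subseteq> carrier \<Gamma>" using \<sigma>c by (auto simp: LL_def)
  have lg: "\<exists>g\<in>generate \<Gamma> LL. \<pi> g = x" if "x \<in> carrier K" for x
    unfolding LL_def
    by (rule lift_generate[OF grpG grpK hom _ SKc]) (use \<sigma>c \<sigma>\<pi> SKc SKgen that in auto)
  define wf where "wf g0 = (SOME w. w \<in> generate \<Gamma> LL \<and> \<pi> w = \<pi> g0)" for g0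
  have wf: "wf g0 \<in> generate \<Gamma> LL \<and> \<pi> (wf g0) = \<pi> g0" if "g0 \<in> carrier \<Gamma>" for g0
  proof -
    have "\<exists>w. w \<in> generate \<Gamma> LL \<and> \<pi> w = \<pi> g0" using lg[of "\<pi> g0"] that by auto
    thus ?thesis unfolding wf_def by (rule someI_ex)
  qed
  have wfc: "wf g0 \<in> carrier \<Gamma>" if "g0 \<in> carrier \<Gamma>" for g0
    using wf[OF that] G.generate_in_carrier[OF LLc] by blast
  define nf where "nf g0 = inv\<^bsub>\<Gamma>\<^esub> (wf g0) \<otimes>\<^bsub>\<Gamma>\<^esub> g0" for g0
  define MM where "MM = nf ` S0"
  define S where "S = LL \<union> m_inv \<Gamma> ` LL \<union> MM \<union> m_inv \<Gamma> ` MM"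
  have MMc: "MM \<subseteq> carrier \<Gamma>" using S0(2) wfc by (auto simp: MM_def nf_def)
  have Sc: "S \<subseteq> carrier \<Gamma>" using LLc MMc by (auto simp: S_def)
  have Sfin: "finite S" using SK(1) S0(1) by (auto simp: S_def LL_def MM_def finite_symmetric_generating_set_def)
  have Ssym: "\<forall>s\<in>S. inv\<^bsub>\<Gamma>\<^esub> s \<in> S"
  proof
    fix s assume s: "s \<in> S"
    show "inv\<^bsub>\<Gamma>\<^esub> s \<in> S"
    proof (cases "s \<in> LL \<union> MM")
      case True thus ?thesis by (auto simp: S_def)
    next
      case False
      then obtain t where t: "t \<in> LL \<union> MM" "s = inv\<^bsub>\<Gamma>\<^esub> t" using s by (auto simp: S_def)
      have "t \<in> carrier \<Gamma>" using t(1) LLc MMc by auto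
      hence "inv\<^bsub>\<Gamma>\<^esub> s = t" using t(2) by simp
      thus ?thesis using t(1) by (auto simp: S_def)
    qed
  qed
  have Sgen: "generate \<Gamma> S = carrier \<Gamma>"
  proof
    show "generate \<Gamma> S \<subseteq> carrier \<Gamma>" by (rule G.generate_incl[OF Sc])
    have "S0 \<subseteq> generate \<Gamma> S"
    proof
      fix g0 assume g0: "g0 \<in> S0"
      have gc: "g0 \<in> carrier \<Gamma>" using g0 S0(2) by auto
      have "wf g0 \<in> generate \<Gamma> S"
        using wf[OF gc] G.mono_generate[of LL S] by (auto simp: S_def)
      moreover have "nf g0 \<in> generate \<Gamma> S" using g0 by (auto simp: S_def MM_def intro: generate.incl)
      ultimately have "wf g0 \<otimes>\<^bsub>\<Gamma>\<^esub> nf g0 \<in> generate \<Gamma> S" by (rule generate.eng)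
      moreover have "wf g0 \<otimes>\<^bsub>\<Gamma>\<^esub> nf g0 = g0" using wfc[OF gc] gc by (simp add: nf_def G.m_assoc[symmetric])
      ultimately show "g0 \<in> generate \<Gamma> S" by simp
    qed
    hence "generate \<Gamma> S0 \<subseteq> generate \<Gamma> S"
      by (rule G.generate_subgroup_incl[OF _ G.generate_is_subgroup[OF Sc]])
    thus "carrier \<Gamma> \<subseteq> generate \<Gamma> S" using S0(3) by simp
  qed
  have Spi: "\<forall>s\<in>S. \<pi> s \<in> SK \<or> \<pi> s = \<one>\<^bsub>K\<^esub>"
  proof
    fix s assume s: "s \<in> S"
    have LLpi: "\<pi> t \<in> SK" if "t \<in> LL" for t using that \<sigma>\<pi> SKc by (auto simp: LL_def)
    have MMpi: "\<pi> t = \<one>\<^bsub>K\<^esub>" if ht: "t \<in> MM" for t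
    proof -
      obtain g0 where g0: "g0 \<in> S0" "t = nf g0" using ht by (auto simp: MM_def)
      have gc: "g0 \<in> carrier \<Gamma>" using g0 S0(2) by auto
      have "\<pi> t = inv\<^bsub>K\<^esub> (\<pi> (wf g0)) \<otimes>\<^bsub>K\<^esub> \<pi> g0" using g0 gc wfc[OF gc] by (simp add: nf_def)
      thus ?thesis using wf[OF gc] gc by simp
    qed
    show "\<pi> s \<in> SK \<or> \<pi> s = \<one>\<^bsub>K\<^esub>"
    proof -
      consider "s \<in> LL" | "s \<in> MM" | t where "t \<in> LL" "s = inv\<^bsub>\<Gamma>\<^esub> t" | t where "t \<in> MM" "s = inv\<^bsub>\<Gamma>\<^esub> t"
        using s by (auto simp: S_def)
      thus ?thesis
      proof cases
        case 1 thus ?thesis using LLpi by blast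
      next
        case 2 thus ?thesis using MMpi by blast
      next
        case (3 t)
        have "\<pi> s = inv\<^bsub>K\<^esub> (\<pi> t)" using 3 LLc by auto
        thus ?thesis using LLpi[OF 3(1)] SKsym by auto
      next
        case (4 t)
        have "\<pi> s = inv\<^bsub>K\<^esub> (\<pi> t)" using 4 MMc by auto
        thus ?thesis using MMpi[OF 4(1)] by simp
      qed
    qed
  qed
  have \<sigma>S: "\<forall>s\<in>SK. \<sigma> s \<in> S" by (auto simp: S_def LL_def)
  have fol: "\<forall>T. finite T \<and> T \<subseteq> kernel \<Gamma> K \<pi> \<longrightarrow> (\<exists>A. finite A \<and> A \<noteq> {} \<and> A \<subseteq> kernel \<Gamma> K \<pi> \<and>
              card {a \<otimes>\<^bsub>\<Gamma>\<^esub> t | a t. a \<in> A \<and> t \<in> T} \<le> 2 * card A)"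
    using amen_folner_kernel[OF grpH grpG hom\<iota> inj am] ker by simp
  have "extraterrestrial (carrier \<Gamma>) (cayley_adj \<Gamma> S)"
    by (rule main_ext[OF grpG grpK hom SKc SK(2) Sc Spi \<sigma>c \<sigma>\<pi> \<sigma>S fol Sfin])
  moreover have "finite_symmetric_generating_set \<Gamma> S"
    unfolding finite_symmetric_generating_set_def using Sfin Sc Ssym Sgen by blast
  ultimately show ?thesis unfolding extraterrestrial_group_def by blast
qed

end
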